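(* Let $U\in\mathbb R^{d\times(d-k)}$, $V\in\mathbb R^{d\times k}$ have orthonormal columns with $UU^*+VV^*=I$, and let $\hat U\in\mathbb R^{d\times(d-k)}$, $\hat V\in\mathbb R^{d\times k}$ have orthonormal columns with $\hat U\hat U^*+\hat V\hat V^*=I$. Let $S\in\mathbb R^{d\times k}$ be such that $V^*S$ and $\hat V^*S$ are invertible. If $\|U^*\hat V\|\le1/2$ and $\|\hat U^*S(\hat V^*S)^{-1}\|\le\gamma\le1$, then $$\|U^*S(V^*S)^{-1}\|\le\frac{2+4\gamma}{3-2\gamma}.$$
   Context: $\|\cdot\|$ is the spectral norm. *)

theory Defs
  imports "HOL-Analysis.Analysis"
begin

definition spec_norm :: "real ^ 'n ^ 'm \<Rightarrow> real" where
  "spec_norm A = onorm (\<lambda>x. A *v x)"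

end

theory Submission
  imports Defs
begin

declare transpose_matrix_vector[simp del] vector_transpose_matrix[simp del]

lemma mv_inner: "((A::real^'n^'m) *v x) \<bullet> y = x \<bullet> (transpose A *v y)"
proof -
  have "linear ((*v) A)" by simp
  from adjoint_works[OF this, of x y] show ?thesis
    by (simp add: adjoint_matrix)
qed

lemma mv_inner2: "x \<bullet> ((A::real^'n^'m) *v y) = (transpose A *v x) \<bullet> y"
  by (metis inner_commute mv_inner)

lemma isom_norm:
  fixes A :: "real^'n^'m"
  assumes "transpose A ** A = mat 1"
  shows "norm (A *v x) = norm x"
proof -
  have "(A *v x) \<bullet> (A *v x) = x \<bullet> x"
    by (simp add: mv_inner matrix_vector_mul_assoc assms)
  then show ?thesis by (simp add: norm_eq_sqrt_inner)
qed

lemma split_norm: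
  fixes A :: "real^'n^'m" and B :: "real^'k^'m"
  assumes "A ** transpose A + B ** transpose B = mat 1"
  shows "norm (transpose A *v z)^2 + norm (transpose B *v z)^2 = norm z ^2"
proof -
  have "z = (A ** transpose A + B ** transpose B) *v z" using assms by simp
  also have "\<dots> = A *v (transpose A *v z) + B *v (transpose B *v z)"
    by (simp add: matrix_vector_mult_add_rdistrib matrix_vector_mul_assoc)
  finally have "z \<bullet> z = z \<bullet> (A *v (transpose A *v z) + B *v (transpose B *v z))" by simp
  also have "\<dots> = (transpose A *v z) \<bullet> (transpose A *v z) + (transpose B *v z) \<bullet> (transpose B *v z)"
    by (simp only: inner_add_right mv_inner2)
  finally show ?thesis by (simp add: power2_norm_eq_inner)
qed

lemma split_le:
  fixes A :: "real^'n^'m" and B :: "real^'k^'m"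
  assumes "A ** transpose A + B ** transpose B = mat 1"
  shows "norm (transpose A *v z) \<le> norm z"
proof -
  have h: "norm (transpose A *v z)^2 \<le> norm z ^2" using split_norm[OF assms, of z]
    by (smt (verit) zero_le_power2)
  show ?thesis by (rule power2_le_imp_le[OF h norm_ge_zero])
qed

lemma spec_bound: "norm ((A::real^'n^'m) *v x) \<le> spec_norm A * norm x"
  unfolding spec_norm_def by (rule onorm) simp

lemma inv_right: "invertible (A::real^'n^'m) \<Longrightarrow> A ** matrix_inv A = mat 1"
  unfolding invertible_def matrix_inv_def by (rule someI_ex[where P="\<lambda>A'. A ** A' = mat 1 \<and> A' ** A = mat 1", THEN conjunct1])
lemma inv_left: "invertible (A::real^'n^'m) \<Longrightarrow> matrix_inv A ** A = mat 1"
  unfolding invertible_def matrix_inv_def by (rule someI_ex[where P="\<lambda>A'. A ** A' = mat 1 \<and> A' ** A = mat 1", THEN conjunct2])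

theorem propositionE3:
  fixes U Uh :: "real ^ 'm ^ 'd" and V Vh S :: "real ^ 'k ^ 'd" and \<gamma> :: real
  assumes dims: "CARD('m) + CARD('k) = CARD('d)"
    and U_orth: "transpose U ** U = mat 1"
    and V_orth: "transpose V ** V = mat 1"
    and UV: "U ** transpose U + V ** transpose V = mat 1"
    and Uh_orth: "transpose Uh ** Uh = mat 1"
    and Vh_orth: "transpose Vh ** Vh = mat 1"
    and UVh: "Uh ** transpose Uh + Vh ** transpose Vh = mat 1"
    and inv1: "invertible (transpose V ** S)"
    and inv2: "invertible (transpose Vh ** S)"
    and h1: "spec_norm (transpose U ** Vh) \<le> 1/2"
    and h2: "spec_norm (transpose Uh ** S ** matrix_inv (transpose Vh ** S)) \<le> \<gamma>"
    and h3: "\<gamma> \<le> 1"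
  shows "spec_norm (transpose U ** S ** matrix_inv (transpose V ** S)) \<le> (2 + 4 * \<gamma>) / (3 - 2 * \<gamma>)"
  unfolding spec_norm_def
proof (rule onorm_le)
  fix y :: "real^'k"
  define N where "N = transpose V ** S"
  define M where "M = transpose Vh ** S"
  define s where "s = S *v (matrix_inv N *v y)"
  define b where "b = transpose Vh *v s"
  define a where "a = transpose Uh *v s"
  define p where "p = transpose U *v s"
  have g0: "0 \<le> \<gamma>" using h2 unfolding spec_norm_def
    by (meson onorm_pos_le matrix_vector_mul_bounded_linear order_trans)
  have lhs: "(transpose U ** S ** matrix_inv N) *v y = p"
    unfolding p_def s_def by (simp only: matrix_vector_mul_assoc matrix_mul_assoc)
  have q: "transpose V *v s = y"
    using inv_right[OF inv1] unfolding s_def N_def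
    by (simp only: matrix_vector_mul_assoc matrix_mul_assoc matrix_vector_mul_lid)
  have bb: "b = M *v (matrix_inv N *v y)"
    unfolding b_def s_def M_def by (simp only: matrix_vector_mul_assoc matrix_mul_assoc)
  have "(transpose Uh ** S ** matrix_inv M) *v b = transpose Uh *v (S *v ((matrix_inv M ** M) *v (matrix_inv N *v y)))"
    unfolding bb by (simp only: matrix_vector_mul_assoc matrix_mul_assoc)
  also have "\<dots> = a"
    using inv_left[OF inv2] unfolding a_def s_def M_def by (simp only: matrix_vector_mul_lid)
  finally have "(transpose Uh ** S ** matrix_inv M) *v b = a" .
  hence na: "norm a \<le> \<gamma> * norm b"
    using spec_bound[of "transpose Uh ** S ** matrix_inv M" b] h2 unfolding M_def
    by (metis mult_right_mono norm_ge_zero order_trans)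
  have sdec: "s = Uh *v a + Vh *v b"
  proof -
    have "s = (Uh ** transpose Uh + Vh ** transpose Vh) *v s" using UVh by simp
    thus ?thesis by (simp add: a_def b_def matrix_vector_mult_add_rdistrib matrix_vector_mul_assoc)
  qed
  have sdec2: "s = U *v p + V *v y"
  proof -
    have "s = (U ** transpose U + V ** transpose V) *v s" using UV by simp
    thus ?thesis using q unfolding p_def by (metis matrix_vector_mul_assoc matrix_vector_mult_add_rdistrib)
  qed
  have np: "norm p \<le> norm a + norm b / 2"
  proof -
    have "p = transpose U *v (Uh *v a) + (transpose U ** Vh) *v b"
      unfolding p_def sdec by (simp only: matrix_vector_right_distrib matrix_vector_mul_assoc)
    hence t: "norm p \<le> norm (transpose U *v (Uh *v a)) + norm ((transpose U ** Vh) *v b)"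
      by (metis norm_triangle_ineq)
    have t1: "norm (transpose U *v (Uh *v a)) \<le> norm a"
      using split_le[OF UV, of "Uh *v a"] isom_norm[OF Uh_orth, of a] by linarith
    have t2: "norm ((transpose U ** Vh) *v b) \<le> norm b / 2"
      using spec_bound[of "transpose U ** Vh" b] mult_right_mono[OF h1 norm_ge_zero, of b]
      by linarith
    show ?thesis using t t1 t2 by linarith
  qed
  have nb: "norm b \<le> norm p / 2 + norm y"
  proof -
    have "norm b ^2 = b \<bullet> (transpose Vh *v s)" by (simp add: b_def power2_norm_eq_inner)
    also have "\<dots> = (Vh *v b) \<bullet> s" by (simp add: mv_inner)
    also have "\<dots> = ((transpose U ** Vh) *v b) \<bullet> p + ((transpose V ** Vh) *v b) \<bullet> y"
      unfolding sdec2 inner_add_right mv_inner2 matrix_vector_mul_assoc ..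
    also have "\<dots> \<le> norm ((transpose U ** Vh) *v b) * norm p + norm ((transpose V ** Vh) *v b) * norm y"
      by (intro add_mono norm_cauchy_schwarz)
    also have "\<dots> \<le> (norm b / 2) * norm p + norm b * norm y"
    proof (intro add_mono mult_right_mono norm_ge_zero)
      show "norm ((transpose U ** Vh) *v b) \<le> norm b / 2"
        using spec_bound[of "transpose U ** Vh" b] mult_right_mono[OF h1 norm_ge_zero, of b]
        by linarith
      show "norm ((transpose V ** Vh) *v b) \<le> norm b"
      proof -
        have UV': "V ** transpose V + U ** transpose U = mat 1" using UV by (simp only: add.commute)
        have "norm ((transpose V ** Vh) *v b) = norm (transpose V *v (Vh *v b))"
          by (simp only: matrix_vector_mul_assoc)
        also have "\<dots> \<le> norm (Vh *v b)" by (rule split_le[OF UV'])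
        also have "\<dots> = norm b" by (rule isom_norm[OF Vh_orth])
        finally show ?thesis .
      qed
    qed
    finally have f: "norm b ^ 2 \<le> (norm b / 2) * norm p + norm b * norm y" .
    have e: "norm b * (norm p / 2 + norm y) = (norm b / 2) * norm p + norm b * norm y"
      by (simp add: algebra_simps)
    have "norm b * norm b \<le> norm b * (norm p / 2 + norm y)"
      using f e unfolding power2_eq_square by linarith
    thus ?thesis
      by (cases "norm b = 0") (auto simp: mult_le_cancel_left)
  qed
  have key: "norm p \<le> (\<gamma> + 1/2) * (norm p / 2 + norm y)"
  proof -
    have e: "(\<gamma> + 1/2) * norm b = \<gamma> * norm b + norm b / 2" by (simp add: algebra_simps)
    have "norm p \<le> (\<gamma> + 1/2) * norm b" using np na e by linarith
    also have "\<dots> \<le> (\<gamma> + 1/2) * (norm p / 2 + norm y)"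
      using nb g0 by (intro mult_left_mono) auto
    finally show ?thesis .
  qed
  have pos: "3 - 2 * \<gamma> > 0" using h3 by simp
  have e2: "(\<gamma> + 1/2) * (norm p / 2 + norm y) = \<gamma> * norm p / 2 + norm p / 4 + \<gamma> * norm y + norm y / 2"
    by (simp add: algebra_simps)
  have e3: "norm p * (3 - 2 * \<gamma>) = 3 * norm p - 2 * (\<gamma> * norm p)" by (simp add: algebra_simps)
  have e4: "(2 + 4 * \<gamma>) * norm y = 2 * norm y + 4 * (\<gamma> * norm y)" by (simp add: algebra_simps)
  have "norm p * (3 - 2 * \<gamma>) \<le> (2 + 4 * \<gamma>) * norm y"
    using key e2 e3 e4 by linarith
  hence fin: "norm p \<le> (2 + 4 * \<gamma>) * norm y / (3 - 2 * \<gamma>)"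
    using pos by (simp only: pos_le_divide_eq)
  show "norm ((transpose U ** S ** matrix_inv (transpose V ** S)) *v y)
        \<le> (2 + 4 * \<gamma>) / (3 - 2 * \<gamma>) * norm y"
    unfolding N_def[symmetric] lhs times_divide_eq_left by (rule fin)
qed

end
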